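(* Let $\mathcal{X}$ be a finite alphabet with $|\mathcal{X}|\ge 2$, and consider the Ising channel with alphabet $\mathcal{X}$ (defined in the context), used with noiseless causal output feedback. There exists a feedback coding scheme for this channel that achieves the rate $$R(\mathcal{X}) = \max_{p \in [0,1]} 2\,\frac{H_2(p) + (1-p) \log_2\left(|\mathcal{X}|-1\right)}{p+3}.$$
   Context: The Ising channel with alphabet $\mathcal{X}$ is a finite-state channel with input $X_t\in\mathcal{X}$, output $Y_t\in\mathcal{X}$ and state $S_{t-1}\in\mathcal{X}$. At each time $t$, given the current input $x_t$, the state $s_{t-1}$ and all the past, the output is $Y_t=x_t$ with probability $1/2$ and $Y_t=s_{t-1}$ with probability $1/2$, independently of everything else. The state then updates as $S_t=X_t$. The initial state $s_0$ is known to both encoder and decoder. With feedback, the encoder chooses $x_t$ as a function of the message and the past outputs $y^{t-1}$. A rate is achievable if there exist feedback codes at that rate, in bits per channel use, with error probability tending to zero. $H_2(p)=-p\log_2 p-(1-p)\log_2(1-p)$ is the binary entropy function. *)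

theory Defs
  imports "HOL-Probability.Probability"
begin

definition H2 :: "real \<Rightarrow> real" where
  "H2 p = (if p = 0 \<or> p = 1 then 0 else - p * log 2 p - (1 - p) * log 2 (1 - p))"

text \<open>One use of the Ising channel: input x, state s (previous input).
  Output is x with probability 1/2 and s with probability 1/2.\<close>
definition ising_step :: "'a \<Rightarrow> 'a \<Rightarrow> 'a pmf" where
  "ising_step x s = map_pmf (\<lambda>b. if b then x else s) (bernoulli_pmf (1/2))"

text \<open>The encoder enc maps the
  message m and the past outputs ys (the feedback) to the next input.
  run_ising enc m s ys k: the current channel state is s, the outputs so far
  are ys, and k further channel uses remain; the result is the distribution
  of the complete output sequence.\<close>
fun run_ising :: "(nat \<Rightarrow> 'a list \<Rightarrow> 'a) \<Rightarrow> nat \<Rightarrow> 'a \<Rightarrow> 'a list \<Rightarrow> nat \<Rightarrow> 'a list pmf" where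
  "run_ising enc m s ys 0 = return_pmf ys"
| "run_ising enc m s ys (Suc k) =
     bind_pmf (ising_step (enc m ys) s) (\<lambda>y. run_ising enc m (enc m ys) (ys @ [y]) k)"

definition fb_error :: "'a \<Rightarrow> nat \<Rightarrow> nat \<Rightarrow> (nat \<Rightarrow> 'a list \<Rightarrow> 'a) \<Rightarrow> ('a list \<Rightarrow> nat) \<Rightarrow> real" where
  "fb_error s0 n M enc dec =
     (\<Sum>m<M. measure_pmf.prob (run_ising enc m s0 [] n) {ys. dec ys \<noteq> m}) / real M"

definition fb_achievable :: "'a \<Rightarrow> real \<Rightarrow> bool" where
  "fb_achievable s0 R \<longleftrightarrow>
     (\<forall>\<epsilon>>0. \<exists>N. \<forall>n\<ge>N. \<exists>M enc dec.
        M \<ge> 1 \<and> real M \<ge> 2 powr (real n * (R - \<epsilon>)) \<and> fb_error s0 n M enc dec \<le> \<epsilon>)"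

definition ising_rate :: "nat \<Rightarrow> real" where
  "ising_rate k = (SUP p\<in>{0..1::real}. 2 * (H2 p + (1 - p) * log 2 (real k - 1)) / (p + 3))"

end

theory Submission imports Defs "HOL-Real_Asymp.Real_Asymp" begin

lemma prob_bind_ising:
  "measure_pmf.prob (bind_pmf (ising_step x c) f) E =
     (measure_pmf.prob (f x) E + measure_pmf.prob (f c) E) / 2"
proof -
  have "emeasure (measure_pmf (bind_pmf (ising_step x c) f)) E =
        ennreal (1/2) * emeasure (measure_pmf (f x)) E + ennreal (1/2) * emeasure (measure_pmf (f c)) E"
    unfolding ising_step_def bind_map_pmf by (simp add: nn_integral_bernoulli_pmf mult.commute)
  also have "\<dots> = ennreal (1/2 * measure_pmf.prob (f x) E + 1/2 * measure_pmf.prob (f c) E)"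
    unfolding measure_pmf.emeasure_eq_measure
    apply (subst ennreal_mult[symmetric], simp, simp)
    apply (subst ennreal_mult[symmetric], simp, simp)
    apply (rule ennreal_plus[symmetric]) apply auto done
  finally have "ennreal (measure_pmf.prob (bind_pmf (ising_step x c) f) E) =
       ennreal (1/2 * measure_pmf.prob (f x) E + 1/2 * measure_pmf.prob (f c) E)"
    by (simp add: measure_pmf.emeasure_eq_measure)
  then show ?thesis by (subst (asm) ennreal_inj) auto
qed

definition dstep :: "'a \<times> bool \<times> 'a list \<Rightarrow> 'a \<Rightarrow> 'a \<times> bool \<times> 'a list" where
  "dstep st y = (case st of (s, ph, ds) \<Rightarrow>
     if ph then (y, False, ds @ [y]) else if y \<noteq> s then (y, False, ds @ [y]) else (s, True, ds))"

definition Dec :: "'a \<Rightarrow> 'a list \<Rightarrow> 'a \<times> bool \<times> 'a list" where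
  "Dec s0 ys = foldl dstep (s0, False, []) ys"

lemma Dec_snoc: "Dec s0 (ys @ [y]) = dstep (Dec s0 ys) y"
  by (simp add: Dec_def)

definition encU :: "(nat \<Rightarrow> nat \<Rightarrow> 'a) \<Rightarrow> 'a \<Rightarrow> nat \<Rightarrow> 'a list \<Rightarrow> 'a" where
  "encU U s0 m ys = U m (Suc (length (snd (snd (Dec s0 ys)))))"

definition decU :: "(nat \<Rightarrow> nat \<Rightarrow> 'a) \<Rightarrow> 'a \<Rightarrow> nat \<Rightarrow> nat \<Rightarrow> 'a list \<Rightarrow> nat" where
  "decU U s0 S M ys = (let ds = snd (snd (Dec s0 ys)) in
     if S \<le> length ds then inv_into {..<M} (\<lambda>m. map (U m) [1..<Suc S]) (take S ds) else 0)"

definition wt :: "(nat \<Rightarrow> 'a) \<Rightarrow> real \<Rightarrow> nat \<Rightarrow> real" where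
  "wt u z i = (if u i = u (i - 1) then z ^ 2 else z * (1 + z) / 2)"

definition Pw :: "(nat \<Rightarrow> 'a) \<Rightarrow> real \<Rightarrow> nat \<Rightarrow> nat \<Rightarrow> real" where
  "Pw u z S i = (\<Prod>l\<in>{i..S}. wt u z l)"

definition Bnd :: "(nat \<Rightarrow> 'a) \<Rightarrow> real \<Rightarrow> nat \<Rightarrow> nat \<Rightarrow> bool \<Rightarrow> nat \<Rightarrow> real" where
  "Bnd u z S k ph j = (if S \<le> j then 0 else (if ph then z * Pw u z S (j + 2) else Pw u z S (j + 1)) / z ^ k)"

lemma wt_ge1: "z \<ge> 1 \<Longrightarrow> wt u z i \<ge> 1"
proof -
  assume z: "z \<ge> 1"
  have "z * z \<ge> 1 * 1" using z by (intro mult_mono) auto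
  then show ?thesis unfolding wt_def using z by (auto simp: field_simps power2_eq_square)
qed

lemma Pw_ge1: "z \<ge> 1 \<Longrightarrow> Pw u z S i \<ge> 1"
  unfolding Pw_def by (rule prod_ge_1) (simp add: wt_ge1)

lemma Pw_split: "i \<le> S \<Longrightarrow> Pw u z S i = wt u z i * Pw u z S (Suc i)"
  unfolding Pw_def by (subst prod.atLeast_Suc_atMost) auto

lemma Bnd_nonneg: "z \<ge> 1 \<Longrightarrow> Bnd u z S k ph j \<ge> 0"
proof -
  assume z: "z \<ge> 1"
  have "Pw u z S i \<ge> 0" for i using Pw_ge1[OF z, of u S i] by linarith
  then show ?thesis unfolding Bnd_def using z by auto
qed

lemma Bnd_F_le: "z \<ge> 1 \<Longrightarrow> Bnd u z S k False (Suc j) \<le> Pw u z S (j + 2) / z ^ k"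
  unfolding Bnd_def using Pw_ge1[of z u S "j+2"] by auto

lemma Bnd_T_Suc: "z \<ge> 1 \<Longrightarrow> \<not> S \<le> j \<Longrightarrow> Bnd u z S (Suc k) True j = Pw u z S (j + 2) / z ^ k"
  unfolding Bnd_def by simp

lemma Bnd_T: "\<not> S \<le> j \<Longrightarrow> Bnd u z S k True j = z * Pw u z S (j + 2) / z ^ k"
  unfolding Bnd_def by simp

lemma Bnd_F_Suc: "z \<ge> 1 \<Longrightarrow> \<not> S \<le> j \<Longrightarrow> Bnd u z S (Suc k) False j = wt u z (Suc j) * Pw u z S (j + 2) / z ^ Suc k"
  unfolding Bnd_def using Pw_split[of "Suc j" S u z] by simp

lemma main_bound:
  fixes U :: "nat \<Rightarrow> nat \<Rightarrow> 'a"
  assumes inj: "inj_on (\<lambda>m. map (U m) [1..<Suc S]) {..<M}" and m: "m < M" and z: "z \<ge> 1"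
  shows "Dec s0 ys = (s, ph, ds) \<Longrightarrow> ds = map (U m) [1..<Suc (length ds)] \<Longrightarrow>
    s = U m (length ds) \<Longrightarrow> c = (if ph then U m (Suc (length ds)) else s) \<Longrightarrow>
    measure_pmf.prob (run_ising (encU U s0) m c ys k) {ys'. decU U s0 S M ys' \<noteq> m}
      \<le> Bnd (U m) z S k ph (length ds)"
proof (induction k arbitrary: ys c s ph ds)
  case 0
  show ?case
  proof (cases "S \<le> length ds")
    case True
    have "take S ds = take S (map (U m) [1..<Suc (length ds)])" using 0(2) by metis
    also have "\<dots> = map (U m) (take S [1..<Suc (length ds)])" by (rule take_map)
    also have "take S [1..<Suc (length ds)] = [1..<1 + S]" by (rule take_upt) (use True in simp)
    also have "(1::nat) + S = Suc S" by simp
    finally have tk: "take S ds = map (U m) [1..<Suc S]" .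
    have "decU U s0 S M ys = inv_into {..<M} (\<lambda>m. map (U m) [1..<Suc S]) (map (U m) [1..<Suc S])"
      unfolding decU_def Let_def 0(1) snd_conv tk using True by (rule if_P)
    also have "\<dots> = m" by (rule inv_into_f_f[OF inj]) (use m in auto)
    finally have dm: "decU U s0 S M ys = m" .
    have "measure_pmf.prob (run_ising (encU U s0) m c ys 0) {ys'. decU U s0 S M ys' \<noteq> m} = 0"
      unfolding run_ising.simps measure_pmf_zero_iff using dm by simp
    then show ?thesis using True by (simp add: Bnd_def)
  next
    case False
    have "measure_pmf.prob (run_ising (encU U s0) m c ys 0) {ys'. decU U s0 S M ys' \<noteq> m} \<le> 1"
      by (rule measure_pmf.prob_le_1)
    also have "1 \<le> Bnd (U m) z S 0 ph (length ds)"
      using False Pw_ge1[OF z] z unfolding Bnd_def by (auto simp: mult_ge1_I) 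
    finally show ?thesis .
  qed
next
  case (Suc k)
  define x where "x = U m (Suc (length ds))"
  define j where "j = length ds"
  have encx: "encU U s0 m ys = x" unfolding encU_def x_def using Suc.prems(1) by simp
  let ?E = "{ys'. decU U s0 S M ys' \<noteq> m}"
  let ?P = "\<lambda>y. measure_pmf.prob (run_ising (encU U s0) m x (ys @ [y]) k) ?E"
  have eq: "measure_pmf.prob (run_ising (encU U s0) m c ys (Suc k)) ?E = (?P x + ?P c) / 2"
    by (simp add: encx prob_bind_ising)
  have "ds @ [x] = map (U m) [1..<Suc (length ds)] @ [x]"
    by (rule arg_cong[where f="\<lambda>l. l @ [x]"]) (rule Suc.prems(2))
  also have "\<dots> = map (U m) [1..<Suc (Suc (length ds))]" by (simp add: x_def)
  finally have ds1: "ds @ [x] = map (U m) [1..<Suc (length (ds @ [x]))]" by simp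
  have Pnn: "Pw (U m) z S i \<ge> 0" for i using Pw_ge1[OF z, of "U m" S i] by linarith
  have Pge: "?P y \<ge> 0" for y by simp
  have zk: "z ^ Suc k = z * z ^ k" by simp
  have zpos: "z > 0" using z by simp
  show ?case
  proof (cases "S \<le> length ds")
    case True
    have "Bnd (U m) z S k ph' j' = 0" if "j' \<ge> length ds" for ph' j'
      using True that unfolding Bnd_def by auto
    note B0 = this
    have "Dec s0 (ys @ [y]) = (s', ph', ds') \<Longrightarrow> ds' = map (U m) [1..<Suc (length ds')] \<Longrightarrow>
      s' = U m (length ds') \<Longrightarrow> x = (if ph' then U m (Suc (length ds')) else s') \<Longrightarrow>
      length ds' \<ge> length ds \<Longrightarrow> ?P y \<le> 0" for y s' ph' ds'
      using Suc.IH[of "ys @ [y]" s' ph' ds' x] B0[of "length ds'" ph'] by simp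
    note IH0 = this
    have "?P x \<le> 0 \<and> ?P c \<le> 0"
    proof (cases ph)
      case True
      have D: "Dec s0 (ys @ [x]) = (x, False, ds @ [x])"
        using Suc.prems(1) True by (simp add: Dec_snoc dstep_def)
      have c: "c = x" using Suc.prems(4) x_def True by simp
      show ?thesis using IH0[OF D ds1] x_def c by simp
    next
      case False
      then have c: "c = s" using Suc.prems(4) by simp
      have D2: "Dec s0 (ys @ [s]) = (s, True, ds)"
        using Suc.prems(1) False by (simp add: Dec_snoc dstep_def)
      have P2: "?P s \<le> 0" using IH0[OF D2 Suc.prems(2,3)] x_def by simp
      show ?thesis
      proof (cases "x = s")
        case True then show ?thesis using P2 c by simp
      next
        case xs: False
        have D1: "Dec s0 (ys @ [x]) = (x, False, ds @ [x])"
          using Suc.prems(1) False xs by (simp add: Dec_snoc dstep_def)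
        show ?thesis using IH0[OF D1 ds1] x_def c P2 by simp
      qed
    qed
    then have "?P x \<le> 0" "?P c \<le> 0" by auto
    then have "(?P x + ?P c) / 2 \<le> 0" by simp
    then show ?thesis unfolding eq using Bnd_nonneg[OF z, of "U m" S "Suc k" ph "length ds"] by (rule order_trans)
  next
    case nS: False
  show ?thesis
  proof (cases ph)
    case True
    then have c: "c = x" using Suc.prems(4) x_def by simp
    have D: "Dec s0 (ys @ [x]) = (x, False, ds @ [x])"
      using Suc.prems(1) True by (simp add: Dec_snoc dstep_def)
    have IH: "?P x \<le> Bnd (U m) z S k False (Suc (length ds))"
      using Suc.IH[OF D ds1] x_def by simp
    also have "\<dots> \<le> Pw (U m) z S (length ds + 2) / z ^ k" by (rule Bnd_F_le[OF z])
    also have "\<dots> = Bnd (U m) z S (Suc k) ph (length ds)"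
      using Bnd_T_Suc[OF z nS, of "U m" k] True by (metis (full_types) add_2_eq_Suc')
    finally show ?thesis unfolding eq unfolding c by simp
  next
    case False
    then have c: "c = s" using Suc.prems(4) by simp
    have D2: "Dec s0 (ys @ [s]) = (s, True, ds)"
      using Suc.prems(1) False by (simp add: Dec_snoc dstep_def)
    have IH2: "?P s \<le> z * Pw (U m) z S (length ds + 2) / z ^ k"
      using Suc.IH[OF D2 Suc.prems(2,3)] x_def Bnd_T[OF nS, of "U m" z k] by simp
    have BF: "Bnd (U m) z S (Suc k) ph (length ds) =
       wt (U m) z (Suc (length ds)) * Pw (U m) z S (length ds + 2) / z ^ Suc k"
      using Bnd_F_Suc[OF z nS, of "U m" k] False by simp
    show ?thesis
    proof (cases "x = s")
      case True
      have w: "wt (U m) z (Suc (length ds)) = z^2"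
        using True Suc.prems(3) x_def by (simp add: wt_def)
      have "z * Pw (U m) z S (length ds + 2) / z ^ k = z^2 * Pw (U m) z S (length ds + 2) / z ^ Suc k"
        using zpos by (simp add: power2_eq_square)
      then show ?thesis unfolding eq unfolding c BF w using IH2 True by simp
    next
      case xs: False
      have D1: "Dec s0 (ys @ [x]) = (x, False, ds @ [x])"
        using Suc.prems(1) False xs by (simp add: Dec_snoc dstep_def)
      have IH1: "?P x \<le> Pw (U m) z S (length ds + 2) / z ^ k"
        using Suc.IH[OF D1 ds1] x_def Bnd_F_le[OF z, of "U m" S k "length ds"] by (smt (verit) length_append_singleton)
      have w: "wt (U m) z (Suc (length ds)) = z * (1 + z) / 2"
        using xs Suc.prems(3) x_def by (simp add: wt_def)
      have "(Pw (U m) z S (length ds + 2) / z ^ k + z * Pw (U m) z S (length ds + 2) / z ^ k) / 2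
          = z * (1 + z) / 2 * Pw (U m) z S (length ds + 2) / z ^ Suc k"
        using zpos by (simp add: field_simps)
      then show ?thesis unfolding eq unfolding c BF w using IH1 IH2 by simp
    qed
  qed
  qed
qed


definition tt :: "nat \<Rightarrow> nat \<Rightarrow> nat \<Rightarrow> nat" where
  "tt b a j = (b choose j) * a ^ j * (b - a) ^ (b - j)"

lemma choose_step: "Suc j * (b choose Suc j) = (b - j) * (b choose j)"
  using binomial_absorption[of j b] binomial_absorb_comp[of b j] by simp

lemma tt_step: "tt b a (Suc j) * Suc j * (b - a) = tt b a j * (b - j) * a"
proof (cases "j < b")
  case True
  have e: "(b - a) ^ (b - Suc j) * (b - a) = (b - a) ^ (b - j)"
    using True by (metis Suc_diff_Suc power_Suc2)
  have "tt b a (Suc j) * Suc j * (b - a) = (Suc j * (b choose Suc j)) * a ^ Suc j * ((b - a) ^ (b - Suc j) * (b - a))"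
    unfolding tt_def by (simp only: ac_simps)
  also have "\<dots> = ((b - j) * (b choose j)) * a ^ Suc j * (b - a) ^ (b - j)"
    by (simp only: choose_step e)
  also have "\<dots> = tt b a j * (b - j) * a" unfolding tt_def by (simp only: power_Suc ac_simps)
  finally show ?thesis .
next
  case False
  then show ?thesis unfolding tt_def by (simp add: binomial_eq_0)
qed

lemma tt_up: assumes "j < a" "a \<le> b" shows "tt b a j \<le> tt b a (Suc j)"
proof (cases "a = b")
  case True
  have "tt b a j = 0" using assms True unfolding tt_def by (simp add: power_0_left)
  then show ?thesis by simp
next
  case False
  have pos: "Suc j * (b - a) > 0" using False assms by simp
  have "int (Suc j * (b - a)) \<le> int ((b - j) * a)"
  proof -
    have "int (Suc j * (b - a)) = (int j + 1) * (int b - int a)" by (subst of_nat_mult, subst of_nat_diff) (use assms in auto)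
    also have "\<dots> \<le> (int b - int j) * int a"
    proof -
      have "(int j + 1) * int b \<le> int a * int b" using assms by (intro mult_right_mono) auto
      then show ?thesis by (simp add: algebra_simps)
    qed
    also have "\<dots> = int ((b - j) * a)" using assms by (simp add: of_nat_diff)
    finally show ?thesis .
  qed
  then have le: "Suc j * (b - a) \<le> (b - j) * a" by (simp only: of_nat_le_iff)
  have "tt b a j * (Suc j * (b - a)) \<le> tt b a j * ((b - j) * a)" using le by (rule mult_left_mono) simp
  also have "\<dots> = tt b a (Suc j) * (Suc j * (b - a))" using tt_step[of b a j] by (simp only: mult.assoc)
  finally show ?thesis using pos by (rule mult_right_le_imp_le)
qed

lemma tt_down: assumes "a \<le> j" "a \<le> b" shows "tt b a (Suc j) \<le> tt b a j"
proof (cases "a = b")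
  case True
  then show ?thesis using assms unfolding tt_def by (simp add: binomial_eq_0)
next
  case False
  have pos: "Suc j * (b - a) > 0" using False assms by simp
  have "int ((b - j) * a) \<le> int (Suc j * (b - a))"
  proof (cases "j \<le> b")
    case True
    have "int ((b - j) * a) = (int b - int j) * int a" using True by (simp add: of_nat_diff)
    also have "\<dots> \<le> (int j + 1) * (int b - int a)"
    proof -
      have "int a * int b \<le> int j * int b" using assms by (intro mult_right_mono) auto
      then show ?thesis using assms by (simp add: algebra_simps)
    qed
    also have "\<dots> = int (Suc j * (b - a))" by (subst of_nat_mult, subst of_nat_diff) (use assms in auto)
    finally show ?thesis .
  next
    case False then show ?thesis by simp
  qed
  then have le: "(b - j) * a \<le> Suc j * (b - a)" by (simp only: of_nat_le_iff)
  have "tt b a (Suc j) * (Suc j * (b - a)) = tt b a j * ((b - j) * a)" using tt_step[of b a j] by (simp only: mult.assoc)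
  also have "\<dots> \<le> tt b a j * (Suc j * (b - a))" using le by (rule mult_left_mono) simp
  finally show ?thesis using pos by (rule mult_right_le_imp_le)
qed

lemma tt_max: assumes "a \<le> b" shows "tt b a j \<le> tt b a a"
proof (cases "j \<le> a")
  case True
  show ?thesis using True
  proof (induction j rule: inc_induct)
    case base then show ?case by simp
  next
    case (step n) then show ?case using tt_up[of n a b] assms by simp
  qed
next
  case False
  then have "a \<le> j" by simp
  then show ?thesis
  proof (induction j rule: dec_induct)
    case base then show ?case by simp
  next
    case (step n) then show ?case using tt_down[of a n b] assms by simp
  qed
qed

lemma binom_entropy_nat: assumes "a \<le> b" shows "b ^ b \<le> (b + 1) * tt b a a"
proof -
  have "b ^ b = (a + (b - a)) ^ b" using assms by simp
  also have "\<dots> = (\<Sum>j\<le>b. tt b a j)" unfolding binomial tt_def by simp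
  also have "\<dots> \<le> (\<Sum>j\<le>b. tt b a a)" by (rule sum_mono) (rule tt_max[OF assms])
  also have "\<dots> = (b + 1) * tt b a a" by simp
  finally show ?thesis .
qed

fun reps :: "'a \<Rightarrow> 'a list \<Rightarrow> nat" where
  "reps s [] = 0"
| "reps s (x # l) = (if x = s then 1 else 0) + reps x l"

definition CB :: "'a \<Rightarrow> nat \<Rightarrow> nat \<Rightarrow> 'a list set" where
  "CB s n a = {l. length l = n \<and> reps s l = a}"

lemma finite_CB: "finite (CB (s::'a::finite) n a)"
proof -
  have "CB s n a \<subseteq> {xs. set xs \<subseteq> UNIV \<and> length xs = n}" unfolding CB_def by auto
  then show ?thesis using finite_lists_length_eq[of "UNIV :: 'a set" n] finite_subset by auto
qed

lemma card_CB: "card (CB (s::'a::finite) n a) = (n choose a) * (CARD('a) - 1) ^ (n - a)"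
proof (induction n arbitrary: s a)
  case 0
  have "CB s 0 a = (if a = 0 then {[]} else {})" unfolding CB_def by auto
  then show ?case by simp
next
  case (Suc n)
  define K where "K = CARD('a) - 1"
  define C where "C x = {l. length l = n \<and> (if x = s then 1 else 0) + reps x l = a}" for x
  have eqU: "CB s (Suc n) a = (\<Union>x\<in>UNIV. (#) x ` C x)"
  proof (rule set_eqI)
    fix l show "l \<in> CB s (Suc n) a \<longleftrightarrow> l \<in> (\<Union>x\<in>UNIV. (#) x ` C x)"
      unfolding CB_def C_def by (cases l) auto
  qed
  have finC: "finite (C x)" for x
  proof -
    have "C x \<subseteq> {xs. set xs \<subseteq> UNIV \<and> length xs = n}" unfolding C_def by auto
    then show ?thesis using finite_lists_length_eq[of "UNIV :: 'a set" n] finite_subset by auto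
  qed
  have "card (CB s (Suc n) a) = (\<Sum>x\<in>UNIV. card ((#) x ` C x))"
    unfolding eqU by (rule card_UN_disjoint) (auto simp: finC)
  also have "\<dots> = (\<Sum>x\<in>UNIV. card (C x))"
    by (rule sum.cong) (auto intro: card_image inj_onI)
  also have "\<dots> = card (C s) + (\<Sum>x\<in>UNIV - {s}. card (C x))"
    by (rule sum.remove) auto
  also have "(\<Sum>x\<in>UNIV - {s}. card (C x)) = (\<Sum>x\<in>UNIV - {s}. (n choose a) * K ^ (n - a))"
  proof (rule sum.cong)
    fix x assume "x \<in> UNIV - {s}"
    then have "C x = CB x n a" unfolding C_def CB_def by auto
    then show "card (C x) = (n choose a) * K ^ (n - a)" using Suc.IH K_def by simp
  qed simp
  also have "\<dots> = K * ((n choose a) * K ^ (n - a))"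
    by (simp add: K_def card_Diff_singleton)
  also have "card (C s) = (if a = 0 then 0 else (n choose (a - 1)) * K ^ (n - (a - 1)))"
  proof (cases a)
    case 0 then have "C s = {}" unfolding C_def by auto
    then show ?thesis using 0 by simp
  next
    case (Suc a') then have "C s = CB s n a'" unfolding C_def CB_def by auto
    then show ?thesis using Suc Suc.IH K_def by simp
  qed
  finally have cc: "card (CB s (Suc n) a) = (if a = 0 then 0 else (n choose (a - 1)) * K ^ (n - (a - 1))) + K * ((n choose a) * K ^ (n - a))" .
  show ?case
  proof (cases a)
    case 0
    then show ?thesis using cc K_def by simp
  next
    case (Suc a')
    have e2: "K * ((n choose a) * K ^ (n - a)) = (n choose a) * K ^ (Suc n - a)"
    proof (cases "a \<le> n")
      case True then have "Suc n - a = Suc (n - a)" by simp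
      then show ?thesis by simp
    next
      case False then show ?thesis by (simp add: binomial_eq_0)
    qed
    have "Suc n - a = n - a'" using Suc by simp
    then have "card (CB s (Suc n) a) = (n choose a') * K ^ (n - a') + (n choose a) * K ^ (n - a')"
      using cc e2 Suc by simp
    also have "\<dots> = (Suc n choose a) * K ^ (Suc n - a)" using Suc by (simp add: algebra_simps)
    finally show ?thesis by (simp add: K_def)
  qed
qed


definition frate :: "nat \<Rightarrow> real \<Rightarrow> real" where
  "frate k p = 2 * (H2 p + (1 - p) * log 2 (real k - 1)) / (p + 3)"

lemma H2_nonneg: "0 \<le> p \<Longrightarrow> p \<le> 1 \<Longrightarrow> 0 \<le> H2 p"
proof -
  assume p: "0 \<le> p" "p \<le> 1"
  show ?thesis
  proof (cases "p = 0 \<or> p = 1")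
    case True then show ?thesis by (auto simp: H2_def)
  next
    case False
    then have p': "0 < p" "p < 1" using p by auto
    have "log 2 p \<le> 0" "log 2 (1 - p) \<le> 0" using p' by auto
    then have "p * log 2 p \<le> 0" "(1 - p) * log 2 (1 - p) \<le> 0" using p'
      by (auto intro: mult_nonneg_nonpos)
    then show ?thesis using False by (simp add: H2_def)
  qed
qed

lemma neg_xlog_le: "0 < p \<Longrightarrow> - p * log 2 p \<le> (1 - p) / ln 2"
proof -
  assume p: "0 < p"
  have "ln (1 / p) \<le> 1 / p - 1" using p by (intro ln_le_minus_one) simp
  then have "- ln p \<le> 1 / p - 1" using p by (simp add: ln_div)
  then have "p * (- ln p) \<le> p * (1 / p - 1)" using p by (intro mult_left_mono) auto
  moreover have "p * (1 / p - 1) = 1 - p" using p by (simp add: field_simps)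
  ultimately have "- p * ln p \<le> 1 - p" by simp
  then show ?thesis unfolding log_def by (simp add: field_simps)
qed

lemma H2_le: "0 \<le> p \<Longrightarrow> p \<le> 1 \<Longrightarrow> H2 p \<le> 1 / ln 2"
proof -
  assume p: "0 \<le> p" "p \<le> 1"
  show ?thesis
  proof (cases "p = 0 \<or> p = 1")
    case True then show ?thesis by (auto simp: H2_def)
  next
    case False
    then have p': "0 < p" "p < 1" using p by auto
    have A: "- (p * log 2 p) \<le> (1 - p) / ln 2" using neg_xlog_le[of p] p' by simp
    have B: "- ((1 - p) * log 2 (1 - p)) \<le> p / ln 2" using neg_xlog_le[of "1 - p"] p' by (simp add: algebra_simps)
    have C: "(1 - p) / ln 2 + p / ln 2 = 1 / ln 2" by (simp add: field_simps)
    have D: "H2 p = - (p * log 2 p) - (1 - p) * log 2 (1 - p)" using False by (simp add: H2_def)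
    show ?thesis using A B C D by linarith
  qed
qed

lemma frate_bdd: "bdd_above (frate k ` {0..1})"
proof (rule bdd_aboveI2)
  fix p :: real assume "p \<in> {0..1}"
  then have p: "0 \<le> p" "p \<le> 1" by auto
  have l: "log 2 (real k - 1) \<le> \<bar>log 2 (real k - 1)\<bar>" by simp
  have "H2 p + (1 - p) * log 2 (real k - 1) \<le> 1 / ln 2 + \<bar>log 2 (real k - 1)\<bar>"
  proof -
    have "(1 - p) * log 2 (real k - 1) \<le> (1 - p) * \<bar>log 2 (real k - 1)\<bar>"
      using p by (intro mult_left_mono) auto
    also have "\<dots> \<le> 1 * \<bar>log 2 (real k - 1)\<bar>" using p by (intro mult_right_mono) auto
    finally show ?thesis using H2_le[OF p] by simp
  qed
  moreover have "0 \<le> H2 p + (1 - p) * log 2 (real k - 1) \<or> True" by simp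
  ultimately have "2 * (H2 p + (1 - p) * log 2 (real k - 1)) / (p + 3) \<le> 2 * (1 / ln 2 + \<bar>log 2 (real k - 1)\<bar>) / (p + 3)"
    using p by (intro divide_right_mono) auto
  also have "\<dots> \<le> 2 * (1 / ln 2 + \<bar>log 2 (real k - 1)\<bar>) / 1"
    using p by (intro divide_left_mono) auto
  finally show "frate k p \<le> 2 * (1 / ln 2 + \<bar>log 2 (real k - 1)\<bar>)" unfolding frate_def by simp
qed

lemma approx_rat:
  fixes h f :: "real \<Rightarrow> real"
  assumes "isCont h c" "0 \<le> c" "c \<le> 1" "\<And>p. 0 < p \<Longrightarrow> p < 1 \<Longrightarrow> h p \<le> f p" "h c = f c" "e > 0"
  shows "\<exists>a b :: nat. 0 < a \<and> a < b \<and> f (real a / real b) > f c - e"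
proof -
  obtain d where d: "d > 0" "\<And>x. x \<noteq> c \<Longrightarrow> norm (x - c) < d \<Longrightarrow> norm (h x - h c) < e"
    using assms(1,6) unfolding isCont_def LIM_eq by blast
  have "max 0 (c - d) < min 1 (c + d)" using d assms by auto
  then obtain r where r: "r \<in> \<rat>" "max 0 (c - d) < r" "r < min 1 (c + d)"
    using Rats_dense_in_real by blast
  obtain m n :: int where mn: "n > 0" "r = of_int m / of_int n" using Rats_cases'[OF r(1)] by metis
  have "m > 0" using r(2) mn by (simp add: zero_less_divide_iff)
  moreover have "m < n" using r(3) mn by (simp add: divide_less_eq)
  ultimately have ab: "0 < nat m" "nat m < nat n" "real (nat m) / real (nat n) = r" using mn by auto
  have "h r > h c - e"
  proof (cases "r = c")
    case True then show ?thesis using assms by simp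
  next
    case False
    have "norm (r - c) < d" using r by auto
    then show ?thesis using d(2)[OF False] by auto
  qed
  moreover have "h r \<le> f r" using assms(4) r by auto
  ultimately show ?thesis using ab assms(5) by (intro exI[of _ "nat m"] exI[of _ "nat n"]) auto
qed

lemma approx_frate:
  assumes "e > 0"
  shows "\<exists>a b :: nat. 0 < a \<and> a < b \<and> frate k (real a / real b) > ising_rate k - e"
proof -
  have "ising_rate k - e / 2 < (SUP p\<in>{0..1}. frate k p)"
    using assms unfolding ising_rate_def frate_def by simp
  then obtain p0 where p0: "p0 \<in> {0..1}" "ising_rate k - e / 2 < frate k p0"
    using less_cSUP_iff[of "{0..1::real}" "frate k"] frate_bdd by auto
  define lam where "lam = log 2 (real k - 1)"
  have "\<exists>a b :: nat. 0 < a \<and> a < b \<and> frate k (real a / real b) > frate k p0 - e / 2"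
  proof (cases "p0 = 0 \<or> p0 = 1")
    case True
    define h where "h p = 2 * ((1 - p) * lam) / (p + 3)" for p
    have "isCont h p0" unfolding h_def using p0 by (intro continuous_intros) auto
    moreover have "h p \<le> frate k p" if "0 < p" "p < 1" for p
      unfolding h_def frate_def lam_def using H2_nonneg[of p] that by (intro divide_right_mono) auto
    moreover have "h p0 = frate k p0" using True unfolding h_def frate_def lam_def by (auto simp: H2_def)
    ultimately show ?thesis using approx_rat[where h=h and f="frate k" and c=p0 and e="e/2"] p0 assms by auto
  next
    case False
    then have p0': "0 < p0" "p0 < 1" using p0 by auto
    define h where "h p = 2 * (- p * log 2 p - (1 - p) * log 2 (1 - p) + (1 - p) * lam) / (p + 3)" for p
    have "isCont h p0" unfolding h_def using p0' by (intro continuous_intros) auto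
    moreover have "h p \<le> frate k p" if "0 < p" "p < 1" for p
      unfolding h_def frate_def lam_def H2_def using that by auto
    moreover have "h p0 = frate k p0" using p0' unfolding h_def frate_def lam_def H2_def by auto
    ultimately show ?thesis using approx_rat[where h=h and f="frate k" and c=p0 and e="e/2"] p0 assms by auto
  qed
  then show ?thesis using p0 by force
qed

lemma ev_log: assumes "e > 0" shows "eventually (\<lambda>n. C + log 2 (real n + 1) \<le> e * real n) sequentially"
proof -
  have l1: "(\<lambda>n. log 2 (real n + 1) / real n) \<longlonglongrightarrow> 0" by real_asymp
  have l2: "(\<lambda>n. C / real n) \<longlonglongrightarrow> 0" by real_asymp
  have "(\<lambda>n. C / real n + log 2 (real n + 1) / real n) \<longlonglongrightarrow> 0 + 0" by (intro tendsto_add l1 l2)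
  then have "eventually (\<lambda>n. C / real n + log 2 (real n + 1) / real n < e) sequentially"
    using assms by (intro order_tendstoD) auto
  moreover have "eventually (\<lambda>n. n > (0::nat)) sequentially" by (rule eventually_gt_at_top)
  ultimately show ?thesis
  proof eventually_elim
    case (elim n)
    then have "(C + log 2 (real n + 1)) / real n < e" by (simp add: add_divide_distrib)
    then show ?case using elim by (simp add: divide_less_eq)
  qed
qed

lemma log_choose:
  assumes "0 < a" "a < b"
  shows "real b * H2 (real a / real b) - log 2 (real b + 1) \<le> log 2 (real (b choose a))"
proof -
  have nat: "b ^ b \<le> (b + 1) * ((b choose a) * a ^ a * (b - a) ^ (b - a))"
    using binom_entropy_nat[of a b] assms unfolding tt_def by simp
  have r: "real (b ^ b) \<le> real ((b + 1) * ((b choose a) * a ^ a * (b - a) ^ (b - a)))"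
    using nat by (simp only: of_nat_le_iff)
  have A: "real a > 0" "real a < real b" "real (b - a) > 0" using assms by auto
  have Cpos: "real (b choose a) > 0" using assms by simp
  have "real b ^ b \<le> (real b + 1) * (real (b choose a) * real a ^ a * real (b - a) ^ (b - a))"
    using r by (simp only: of_nat_mult of_nat_power of_nat_add of_nat_1)
  then have "log 2 (real b ^ b) \<le> log 2 ((real b + 1) * (real (b choose a) * real a ^ a * real (b - a) ^ (b - a)))"
    using A by (intro log_le_cancel_iff[THEN iffD2]) auto
  also have "\<dots> = log 2 (real b + 1) + log 2 (real (b choose a)) + real a * log 2 (real a) + real (b - a) * log 2 (real (b - a))"
    using A Cpos by (simp add: log_mult log_nat_power)
  finally have L: "real b * log 2 (real b) \<le> log 2 (real b + 1) + log 2 (real (b choose a)) + real a * log 2 (real a) + real (b - a) * log 2 (real (b - a))"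
    using A by (simp add: log_nat_power)
  define A where "A = real a"
  define B where "B = real b"
  have A': "A > 0" "A < B" using A unfolding A_def B_def by auto
  have ba: "real (b - a) = B - A" using assms unfolding A_def B_def by (simp add: of_nat_diff)
  have H: "B * H2 (A / B) = B * log 2 B - A * log 2 A - (B - A) * log 2 (B - A)"
  proof -
    have ne: "A / B \<noteq> 0" "A / B \<noteq> 1" using A' by auto
    have e1: "1 - A / B = (B - A) / B" using A' by (simp add: field_simps)
    have "B * H2 (A / B) = - A * log 2 (A / B) - (B - A) * log 2 ((B - A) / B)"
      unfolding H2_def using ne A' e1 by (simp add: field_simps)
    also have "\<dots> = B * log 2 B - A * log 2 A - (B - A) * log 2 (B - A)"
      using A' by (simp add: log_divide algebra_simps)
    finally show ?thesis .
  qed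
  have ba': "real (b - a) = real b - real a" using assms by (simp add: of_nat_diff)
  show ?thesis using L[unfolded ba'] H unfolding A_def B_def by linarith
qed

lemma g_le_powr:
  fixes eta :: real
  assumes "eta > 0"
  shows "(1 + 2 * eta) * (1 + (1 + 2 * eta)) / 2 \<le> (1 + 2 * eta) powr (3 / 2 + eta)"
proof -
  define z where "z = 1 + 2 * eta"
  have z: "z > 1" using assms unfolding z_def by simp
  have "ln (1 / z) \<le> 1 / z - 1" using z by (intro ln_le_minus_one) simp
  then have lz: "1 - 1 / z \<le> ln z" using z by (simp add: ln_div)
  have "ln (1 + eta) \<le> eta" using assms by (intro ln_add_one_self_le_self) simp
  also have "eta = (1 / 2 + eta) * (1 - 1 / z)" using assms unfolding z_def by (simp add: field_simps)
  also have "\<dots> \<le> (1 / 2 + eta) * ln z" using lz assms by (intro mult_left_mono) auto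
  finally have "ln (1 + eta) \<le> (1 / 2 + eta) * ln z" .
  then have "exp (ln (1 + eta)) \<le> exp ((1 / 2 + eta) * ln z)" by simp
  then have "1 + eta \<le> z powr (1 / 2 + eta)" using assms z by (simp add: powr_def)
  then have "z * (1 + eta) \<le> z * z powr (1 / 2 + eta)" using z by (intro mult_left_mono) auto
  also have "z * z powr (1 / 2 + eta) = z powr (3 / 2 + eta)"
  proof -
    have "z powr (3 / 2 + eta) = z powr (1 + (1 / 2 + eta))" by simp
    also have "\<dots> = z powr 1 * z powr (1 / 2 + eta)" by (rule powr_add)
    finally show ?thesis using z by simp
  qed
  finally show ?thesis unfolding z_def by (simp add: field_simps)
qed

lemma reps_le: "reps s l \<le> length l"
proof (induction l arbitrary: s)
  case (Cons x l) then show ?case using Cons.IH[of x] by (simp add: le_SucI)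
qed simp

lemma prod_reps:
  "(\<Prod>i\<in>{1..length l}. (if (s # l) ! i = (s # l) ! (i - 1) then z2 else g)) =
     z2 ^ reps s l * g ^ (length l - reps s l)"
proof (induction l arbitrary: s)
  case Nil then show ?case by simp
next
  case (Cons x l)
  have "(\<Prod>i\<in>{1..length (x # l)}. (if (s # x # l) ! i = (s # x # l) ! (i - 1) then z2 else g)) =
        (if x = s then z2 else g) * (\<Prod>i\<in>{Suc 1..Suc (length l)}. (if (s # x # l) ! i = (s # x # l) ! (i - 1) then z2 else g))"
    by (subst prod.atLeast_Suc_atMost) auto
  also have "(\<Prod>i\<in>{Suc 1..Suc (length l)}. (if (s # x # l) ! i = (s # x # l) ! (i - 1) then z2 else g)) =
        (\<Prod>i\<in>{1..length l}. (if (s # x # l) ! Suc i = (s # x # l) ! (Suc i - 1) then z2 else g))"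
    by (rule prod.shift_bounds_cl_Suc_ivl)
  also have "\<dots> = (\<Prod>i\<in>{1..length l}. (if (x # l) ! i = (x # l) ! (i - 1) then z2 else g))"
    by (rule prod.cong) (auto simp: nth_Cons')
  also have "\<dots> = z2 ^ reps x l * g ^ (length l - reps x l)" by (rule Cons.IH)
  also have "(if x = s then z2 else g) * (z2 ^ reps x l * g ^ (length l - reps x l)) =
     z2 ^ reps s (x # l) * g ^ (length (x # l) - reps s (x # l))"
    using reps_le[of x l] by (cases "x = s") (simp_all add: Suc_diff_le mult_ac)
  finally show ?case .
qed

lemma main_init:
  fixes U :: "nat \<Rightarrow> nat \<Rightarrow> 'a"
  assumes "inj_on (\<lambda>m. map (U m) [1..<Suc S]) {..<M}" "m < M" "z \<ge> 1" "U m 0 = s0"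
  shows "measure_pmf.prob (run_ising (encU U s0) m s0 [] n) {ys'. decU U s0 S M ys' \<noteq> m}
      \<le> Bnd (U m) z S n False 0"
proof -
  have D: "Dec s0 [] = (s0, False, [])" by (simp add: Dec_def)
  show ?thesis using main_bound[OF assms(1,2,3) D] assms(4) by simp
qed

lemma real_nat_floor_le: "real (nat \<lfloor>x\<rfloor>) \<le> max 0 x"
  by (cases "x \<ge> 0") (auto simp: of_nat_nat)

lemma real_nat_floor_ge: "real (nat \<lfloor>x\<rfloor>) \<ge> x - 1"
proof (cases "\<lfloor>x\<rfloor> \<ge> 0")
  case True then show ?thesis by (simp add: of_nat_nat)
next
  case False then have "x < 0" by linarith
  then show ?thesis by simp
qed

theorem theorem4:
  fixes s0 :: "'a::finite"
  assumes "CARD('a) \<ge> 2"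
  shows "fb_achievable s0 (ising_rate CARD('a))"
  unfolding fb_achievable_def
proof (intro allI impI)
  fix \<epsilon> :: real assume eps: "\<epsilon> > 0"
  define k where "k = CARD('a)"
  have k2: "k \<ge> 2" using assms k_def by simp
  define R where "R = ising_rate k"
  obtain a b :: nat where ab: "0 < a" "a < b" "frate k (real a / real b) > R - \<epsilon> / 3"
    using approx_frate[of "\<epsilon> / 3" k] eps unfolding R_def by auto
  define q where "q = real a / real b"
  define lam where "lam = log 2 (real k - 1)"
  define F where "F = H2 q + (1 - q) * lam"
  have q: "0 < q" "q < 1" using ab unfolding q_def by auto
  have lam: "lam \<ge> 0" using k2 unfolding lam_def by simp
  have F0: "F \<ge> 0" using H2_nonneg[of q] q lam unfolding F_def by simp
  have fq: "2 * F / (q + 3) > R - \<epsilon> / 3" using ab(3) unfolding frate_def F_def q_def lam_def by simp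
  define eta where "eta = \<epsilon> / (6 * (F + 1))"
  have eta: "eta > 0" using eps F0 unfolding eta_def by simp
  define z where "z = 1 + 2 * eta"
  have z: "z > 1" using eta unfolding z_def by simp
  define g where "g = z * (1 + z) / 2"
  have g: "g \<le> z powr (3 / 2 + eta)" using g_le_powr[OF eta] unfolding g_def z_def .
  have g0: "g \<ge> 0" using z unfolding g_def by simp
  define kap where "kap = 2 * q + (1 - q) * (3 / 2 + eta)"
  have kap1: "kap \<ge> 1"
  proof -
    have "(1 - q) * 1 \<le> (1 - q) * (3 / 2 + eta)" using q eta by (intro mult_left_mono) auto
    then have "2 * q + (1 - q) * 1 \<le> kap" unfolding kap_def by (rule add_left_mono)
    then show ?thesis using q by simp
  qed
  define c where "c = (3 + q) / 2"
  have c: "c \<ge> 1" using q unfolding c_def by simp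
  have kapc: "kap \<le> c + eta"
  proof -
    have "(1 - q) * eta \<le> 1 * eta" using q eta by (intro mult_right_mono) auto
    moreover have "kap = c + (1 - q) * eta" unfolding kap_def c_def by (simp add: field_simps)
    ultimately show ?thesis by simp
  qed
  have kapR: "F / kap \<ge> R - \<epsilon> / 2"
  proof -
    have "F / (c + eta) \<le> F / kap" using F0 kap1 kapc by (intro divide_left_mono) auto
    moreover have "F / c - F / (c + eta) = F * eta / (c * (c + eta))"
      using c eta by (simp add: field_simps)
    moreover have "F * eta / (c * (c + eta)) \<le> F * eta / 1"
    proof -
      have "1 * 1 \<le> c * (c + eta)" using c eta by (intro mult_mono) auto
      then show ?thesis using F0 eta by (intro divide_left_mono) auto
    qed
    moreover have "F * eta \<le> \<epsilon> / 6"
    proof -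
      have "F * eta = \<epsilon> / 6 * (F / (F + 1))" unfolding eta_def using F0 by (simp add: field_simps)
      also have "\<dots> \<le> \<epsilon> / 6 * 1" using F0 eps by (intro mult_left_mono) auto
      finally show ?thesis by simp
    qed
    moreover have "2 * F / (q + 3) = F / c" unfolding c_def by (simp add: field_simps)
    ultimately show ?thesis using fq by linarith
  qed
  define L where "L = max 0 (- ln \<epsilon> / ln z)"
  have L0: "L \<ge> 0" unfolding L_def by simp
  have zL: "z powr (- L) \<le> \<epsilon>"
  proof (cases "\<epsilon> \<ge> 1")
    case True
    have "z powr (- L) \<le> z powr 0" using z L0 by (intro powr_mono) auto
    then show ?thesis using True z by simp
  next
    case False
    have "ln \<epsilon> \<le> 0" using False eps by (subst ln_le_zero_iff) auto
    then have l1: "- ln \<epsilon> \<ge> 0" by linarith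
    have l2: "ln z > 0" using z by simp
    have "- ln \<epsilon> / ln z \<ge> 0" using divide_nonneg_pos[OF l1 l2] .
    then have "L = - ln \<epsilon> / ln z" unfolding L_def by simp
    then have "- L * ln z = ln \<epsilon>" using l2 by simp
    moreover have "z powr (- L) = exp (- L * ln z)" using z unfolding powr_def by simp
    ultimately have "z powr (- L) = exp (ln \<epsilon>)" by simp
    then show ?thesis using eps by simp
  qed
  define C0 where "C0 = L * F / kap + real b * F"
  obtain N where N: "\<And>n. n \<ge> N \<Longrightarrow> C0 + log 2 (real n + 1) \<le> \<epsilon> / 2 * real n"
    using ev_log[of "\<epsilon> / 2" C0] eps unfolding eventually_sequentially by auto
  show "\<exists>N. \<forall>n\<ge>N. \<exists>M enc dec. M \<ge> 1 \<and> real M \<ge> 2 powr (real n * (ising_rate CARD('a) - \<epsilon>)) \<and> fb_error s0 n M enc dec \<le> \<epsilon>"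
  proof (rule exI[of _ N], intro allI impI)
    fix n assume nN: "n \<ge> N"
    define x where "x = (real n - L) / (kap * real b)"
    define j where "j = nat \<lfloor>x\<rfloor>"
    define S where "S = j * b"
    define A where "A = j * a"
    define M where "M = card (CB s0 S A)"
    have finCB: "finite (CB s0 S A)" by (rule finite_CB)
    obtain h where h: "bij_betw h {0..<M} (CB s0 S A)"
      using ex_bij_betw_nat_finite[OF finCB] unfolding M_def by auto
    define U where "U m i = (s0 # h m) ! (min i S)" for m i
    have Mform: "M = (S choose A) * (k - 1) ^ (S - A)" unfolding M_def k_def by (rule card_CB)
    have AS: "A \<le> S" using ab unfolding A_def S_def by simp
    have M1: "M \<ge> 1"
    proof -
      have "(S choose A) > 0" using AS by simp
      moreover have "(k - 1) ^ (S - A) > 0" using k2 by simp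
      ultimately show ?thesis unfolding Mform by (simp add: Suc_le_eq)
    qed
    have hm: "h m \<in> CB s0 S A" if "m < M" for m using h that by (auto dest: bij_betwE)
    have mapU: "map (U m) [1..<Suc S] = h m" if "m < M" for m
    proof -
      have len: "length (h m) = S" using hm[OF that] unfolding CB_def by simp
      show ?thesis
      proof (rule nth_equalityI)
        show "length (map (U m) [1..<Suc S]) = length (h m)" using len by (simp del: upt_Suc)
        fix i assume "i < length (map (U m) [1..<Suc S])"
        then have i: "i < S" by (simp del: upt_Suc)
        then show "map (U m) [1..<Suc S] ! i = h m ! i" unfolding U_def by (simp add: nth_upt del: upt_Suc)
      qed
    qed
    have inj: "inj_on (\<lambda>m. map (U m) [1..<Suc S]) {..<M}"
    proof -
      have "inj_on h {..<M}" using bij_betw_imp_inj_on[OF h] by (simp add: atLeast0LessThan)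
      note hi = this
      show ?thesis
      proof (rule inj_onI)
        fix m1 m2 assume m12: "m1 \<in> {..<M}" "m2 \<in> {..<M}"
          and eq: "map (U m1) [1..<Suc S] = map (U m2) [1..<Suc S]"
        have e1: "map (U m1) [1..<Suc S] = h m1" using mapU m12 by simp
        have e2: "map (U m2) [1..<Suc S] = h m2" using mapU m12 by simp
        have "h m1 = h m2" using e1 e2 eq by simp
        then show "m1 = m2" using inj_onD[OF hi _ m12] by blast
      qed
    qed
    have S1: "real S * kap \<le> max 0 (real n - L)"
    proof -
      have "real j \<le> max 0 x" unfolding j_def by (rule real_nat_floor_le)
      then have "real j * (kap * real b) \<le> max 0 x * (kap * real b)" using kap1 by (intro mult_right_mono) auto
      also have "\<dots> = max 0 (x * (kap * real b))"
      proof -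
        have P: "kap * real b > 0" using kap1 ab by simp
        show ?thesis
        proof (cases "0 \<le> x")
          case True then show ?thesis using P by (simp add: max_def)
        next
          case False then have "x * (kap * real b) < 0" using P by (simp add: mult_neg_pos)
          then show ?thesis using False by (simp add: max_def)
        qed
      qed
      also have "x * (kap * real b) = real n - L" unfolding x_def using kap1 ab by simp
      finally show ?thesis unfolding S_def by (simp add: algebra_simps)
    qed
    have S2: "real S \<ge> (real n - L) / kap - real b"
    proof -
      have "real j \<ge> x - 1" unfolding j_def by (rule real_nat_floor_ge)
      then have "real j * real b \<ge> (x - 1) * real b" by (intro mult_right_mono) auto
      moreover have "(x - 1) * real b = (real n - L) / kap - real b" unfolding x_def using kap1 ab by (simp add: field_simps)
      ultimately show ?thesis unfolding S_def by simp
    qed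
    have S3: "real S \<le> real n"
    proof -
      have "real S * 1 \<le> real S * kap" using kap1 by (intro mult_left_mono) auto
      then show ?thesis using S1 L0 by simp
    qed
    have logM: "log 2 (real M) \<ge> real S * F - log 2 (real S + 1)"
    proof (cases "j = 0")
      case True
      then have "S = 0" "A = 0" unfolding S_def A_def by auto
      then show ?thesis using Mform by simp
    next
      case False
      then have A0: "0 < A" "A < S" using ab unfolding A_def S_def by auto
      have qA: "real A / real S = q" unfolding q_def A_def S_def using False by simp
      have k1: "real (k - 1) = real k - 1" using k2 by (simp add: of_nat_diff)
      have SA: "real (S - A) = real S * (1 - q)" using AS qA A0 by (simp add: of_nat_diff field_simps)
      have Cpos: "real (S choose A) > 0" using AS by simp
      have "real M = real (S choose A) * (real k - 1) ^ (S - A)" unfolding Mform k1[symmetric] by simp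
      then have "log 2 (real M) = log 2 (real (S choose A)) + real (S - A) * lam"
        using Cpos k2 unfolding lam_def by (simp add: log_mult log_nat_power)
      moreover have "log 2 (real (S choose A)) \<ge> real S * H2 q - log 2 (real S + 1)"
        using log_choose[OF A0] qA by simp
      ultimately show ?thesis unfolding F_def SA by (simp add: algebra_simps)
    qed
    have rate: "real n * (R - \<epsilon>) \<le> log 2 (real M)"
    proof -
      have f1: "log 2 (real S + 1) \<le> log 2 (real n + 1)" using S3 by simp
      have f2: "real S * F \<ge> ((real n - L) / kap - real b) * F" using S2 F0 by (intro mult_right_mono) auto
      have f3: "((real n - L) / kap - real b) * F = real n * (F / kap) - C0"
        unfolding C0_def using kap1 by (simp add: field_simps)
      have f4: "real n * (F / kap) \<ge> real n * (R - \<epsilon> / 2)" using kapR by (intro mult_left_mono) auto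
      have f5: "C0 + log 2 (real n + 1) \<le> \<epsilon> / 2 * real n" using N nN by simp
      have "real n * (R - \<epsilon>) = real n * (R - \<epsilon> / 2) - \<epsilon> / 2 * real n" by (simp add: algebra_simps)
      also have "\<dots> \<le> real n * (F / kap) - \<epsilon> / 2 * real n" using f4 by simp
      also have "\<dots> = ((real n - L) / kap - real b) * F + C0 - \<epsilon> / 2 * real n" using f3 by simp
      also have "\<dots> \<le> real S * F + C0 - \<epsilon> / 2 * real n" using f2 by simp
      also have "\<dots> \<le> log 2 (real M) + log 2 (real S + 1) + C0 - \<epsilon> / 2 * real n" using logM by simp
      also have "\<dots> \<le> log 2 (real M) + log 2 (real n + 1) + C0 - \<epsilon> / 2 * real n" using f1 by simp
      also have "\<dots> \<le> log 2 (real M)" using f5 by simp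
      finally show ?thesis .
    qed
    have Mpow: "real M \<ge> 2 powr (real n * (ising_rate CARD('a) - \<epsilon>))"
    proof -
      have "2 powr (real n * (R - \<epsilon>)) \<le> 2 powr (log 2 (real M))" using rate by (intro powr_mono) auto
      also have "\<dots> = real M" using M1 by simp
      finally show ?thesis unfolding R_def k_def .
    qed
    have Perr: "measure_pmf.prob (run_ising (encU U s0) m s0 [] n) {ys'. decU U s0 S M ys' \<noteq> m} \<le> \<epsilon>"
      if m: "m < M" for m
    proof -
      have "measure_pmf.prob (run_ising (encU U s0) m s0 [] n) {ys'. decU U s0 S M ys' \<noteq> m}
          \<le> Bnd (U m) z S n False 0"
        using main_init[OF inj m, of z] z by (simp add: U_def)
      also have "\<dots> \<le> \<epsilon>"
      proof (cases "S = 0")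
        case True then show ?thesis using eps by (simp add: Bnd_def)
      next
        case False
        then have j0: "j \<noteq> 0" unfolding S_def by auto
        have len: "length (h m) = S" and rp: "reps s0 (h m) = A" using hm[OF m] unfolding CB_def by auto
        have "Pw (U m) z S 1 = (\<Prod>i\<in>{1..length (h m)}. (if (s0 # h m) ! i = (s0 # h m) ! (i - 1) then z ^ 2 else g))"
          unfolding Pw_def len g_def
          by (rule prod.cong) (auto simp: wt_def U_def min_def)
        also have "\<dots> = (z ^ 2) ^ A * g ^ (S - A)" using prod_reps[of s0 "h m" "z ^ 2" g] len rp by simp
        also have "\<dots> \<le> (z ^ 2) ^ A * (z powr (3 / 2 + eta)) ^ (S - A)"
          using g g0 z by (intro mult_left_mono power_mono) auto
        also have "\<dots> = z powr (real S * kap)"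
        proof -
          have qA: "real A = q * real S" unfolding q_def A_def S_def using ab by simp
          have e1: "(z ^ 2) ^ A = z powr (2 * real A)"
          proof -
            have "(z ^ 2) ^ A = z ^ (2 * A)" by (simp add: power_mult)
            also have "\<dots> = z powr (real (2 * A))" by (rule powr_realpow[symmetric]) (use z in simp)
            finally show ?thesis by simp
          qed
          have e2: "(z powr (3 / 2 + eta)) ^ (S - A) = z powr ((3 / 2 + eta) * real (S - A))"
            using z by (simp add: powr_realpow[symmetric] powr_powr)
          have e3: "2 * real A + (3 / 2 + eta) * real (S - A) = real S * kap"
            unfolding kap_def using AS qA by (simp add: of_nat_diff algebra_simps)
          show ?thesis unfolding e1 e2 e3[symmetric] by (simp add: powr_add)
        qed
        finally have P: "Pw (U m) z S 1 \<le> z powr (real S * kap)" .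
        have "Bnd (U m) z S n False 0 = Pw (U m) z S 1 / z ^ n" using False by (simp add: Bnd_def)
        also have "\<dots> \<le> z powr (real S * kap) / z ^ n" using P z by (intro divide_right_mono) auto
        also have "\<dots> = z powr (real S * kap - real n)" using z by (simp add: powr_diff powr_realpow)
        also have "\<dots> \<le> z powr (- L)"
        proof -
          have "real S * kap > 0" using False kap1 by simp
          then have "real S * kap \<le> real n - L" using S1 by linarith
          then show ?thesis using z by (intro powr_mono) auto
        qed
        finally show ?thesis using zL by simp
      qed
      finally show ?thesis .
    qed
    have err: "fb_error s0 n M (encU U s0) (decU U s0 S M) \<le> \<epsilon>"
    proof -
      have "(\<Sum>m<M. measure_pmf.prob (run_ising (encU U s0) m s0 [] n) {ys. decU U s0 S M ys \<noteq> m}) \<le> (\<Sum>m<M. \<epsilon>)"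
        by (rule sum_mono) (use Perr in auto)
      then have "(\<Sum>m<M. measure_pmf.prob (run_ising (encU U s0) m s0 [] n) {ys. decU U s0 S M ys \<noteq> m}) / real M \<le> real M * \<epsilon> / real M"
        using M1 by (intro divide_right_mono) auto
      then show ?thesis unfolding fb_error_def using M1 by simp
    qed
    show "\<exists>M enc dec. M \<ge> 1 \<and> real M \<ge> 2 powr (real n * (ising_rate CARD('a) - \<epsilon>)) \<and> fb_error s0 n M enc dec \<le> \<epsilon>"
      using M1 Mpow err by blast
  qed
qed
end
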